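(* Let $R$ be a unital associative ring and $$A=\begin{pmatrix}1&1&1\\1&a&b\\1&c&d\end{pmatrix}\in\widehat{\cal S},\qquad \Phi(A)=\begin{pmatrix}1&1&1\\1&a'&b'\\1&c'&d'\end{pmatrix}.$$ Then $$a'=(d-1)^{-1}(d-c)a^{-1}(db^{-1}-ca^{-1})^{-1}(db^{-1}-1),\quad b'=(c-1)^{-1}(d-c)b^{-1}(db^{-1}-ca^{-1})^{-1}(ca^{-1}-1),$$ $$c'=(b-1)^{-1}(b-a)a^{-1}(db^{-1}-ca^{-1})^{-1}(db^{-1}-1),\quad d'=(a-1)^{-1}(b-a)b^{-1}(db^{-1}-ca^{-1})^{-1}(ca^{-1}-1).$$
   Context: $R^*$: units of $R$. $M_3^*(R)$: invertible $3\times3$ matrices; $M_3^\star(R)$: matrices with all entries in $R^*$. $J_1(M)=M^{-1}$; $J_2(M)_{jk}=(M_{kj})^{-1}$; $J=J_2\circ J_1$. $\widehat M_3(R)$: matrices whose first row and column consist of $1$'s. For $A=\{a_{j,k}\}\in M_3^\star(R)$: $\Lambda^L(A)_{j,k}=a_{1,1}a_{j,1}^{-1}a_{j,k}a_{1,k}^{-1}$. $\Phi(A)=J_2(\Lambda^L(A^{-1}))$. ${\cal S}=\{M\in M_3(R):$ all square submatrices of $M$ are invertible and $J_2(M)$ is invertible$\}$, $\widehat{\cal S}={\cal S}\cap\widehat M_3(R)$. *)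

theory Defs
  imports Main
begin

text \<open>A 3x3 matrix over R is a function nat => nat => R, of which only the
entries with indices in {1,2,3} are meaningful.\<close>

type_synonym 'a mat3 = "nat \<Rightarrow> nat \<Rightarrow> 'a"

definition idx :: "nat set" where "idx = {1..3}"

definition is_unit_r :: "'a::ring_1 \<Rightarrow> bool" where
  "is_unit_r x \<longleftrightarrow> (\<exists>y. x * y = 1 \<and> y * x = 1)"

definition rinv :: "'a::ring_1 \<Rightarrow> 'a" where
  "rinv x = (THE y. x * y = 1 \<and> y * x = 1)"

definition is_inverse_on :: "nat set \<Rightarrow> nat set \<Rightarrow> 'a::ring_1 mat3 \<Rightarrow> 'a mat3 \<Rightarrow> bool" where
  "is_inverse_on I J M B \<longleftrightarrow>
     (\<forall>i\<in>I. \<forall>i'\<in>I. (\<Sum>j\<in>J. M i j * B j i') = (if i = i' then 1 else 0)) \<and>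
     (\<forall>j\<in>J. \<forall>j'\<in>J. (\<Sum>i\<in>I. B j i * M i j') = (if j = j' then 1 else 0))"

definition invertible3 :: "'a::ring_1 mat3 \<Rightarrow> bool" where
  "invertible3 M \<longleftrightarrow> (\<exists>B. is_inverse_on idx idx M B)"

definition inv3 :: "'a::ring_1 mat3 \<Rightarrow> 'a mat3" where
  "inv3 M = (SOME B. is_inverse_on idx idx M B)"

definition J2 :: "'a::ring_1 mat3 \<Rightarrow> 'a mat3" where
  "J2 M = (\<lambda>j k. rinv (M k j))"

definition LambdaL :: "'a::ring_1 mat3 \<Rightarrow> 'a mat3" where
  "LambdaL A = (\<lambda>j k. A 1 1 * rinv (A j 1) * A j k * rinv (A 1 k))"

definition Phi :: "'a::ring_1 mat3 \<Rightarrow> 'a mat3" where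
  "Phi A = J2 (LambdaL (inv3 A))"

definition all_square_submatrices_invertible :: "'a::ring_1 mat3 \<Rightarrow> bool" where
  "all_square_submatrices_invertible M \<longleftrightarrow>
     (\<forall>I J. I \<subseteq> idx \<and> J \<subseteq> idx \<and> I \<noteq> {} \<and> card I = card J \<longrightarrow>
        (\<exists>B. is_inverse_on I J M B))"

definition in_S :: "'a::ring_1 mat3 \<Rightarrow> bool" where
  "in_S M \<longleftrightarrow> all_square_submatrices_invertible M \<and> invertible3 (J2 M)"

definition in_hatM :: "'a::ring_1 mat3 \<Rightarrow> bool" where
  "in_hatM M \<longleftrightarrow> (\<forall>k\<in>idx. M 1 k = 1 \<and> M k 1 = 1)"

definition in_hatS :: "'a::ring_1 mat3 \<Rightarrow> bool" where
  "in_hatS M \<longleftrightarrow> in_S M \<and> in_hatM M"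

definition hatmat :: "'a::ring_1 \<Rightarrow> 'a \<Rightarrow> 'a \<Rightarrow> 'a \<Rightarrow> 'a mat3" where
  "hatmat a b c d = (\<lambda>i j. if i = 1 \<or> j = 1 then 1
       else if i = 2 \<and> j = 2 then a else if i = 2 \<and> j = 3 then b
       else if i = 3 \<and> j = 2 then c else if i = 3 \<and> j = 3 then d else 0)"

end

theory Submission
  imports Defs
begin

lemma unit_inv: assumes "is_unit_r (x::'a::ring_1)" shows "x * rinv x = 1" "rinv x * x = 1"
proof -
  obtain y where y: "x*y = 1" "y*x = 1" using assms unfolding is_unit_r_def by blast
  have u: "z = y" if "x*z = 1 \<and> z*x = 1" for z
  proof -
    have "z = (y*x)*z" using y by simp
    also have "... = y*(x*z)" by (simp add: mult.assoc)
    finally show "z = y" using that by simp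
  qed
  have "rinv x = y" unfolding rinv_def
    apply (rule the_equality)
    using y apply (rule conjI)
    using u by blast
  then show "x * rinv x = 1" "rinv x * x = 1" using y by auto
qed

lemma rinv_eq: assumes "(x::'a::ring_1) * y = 1" "y * x = 1" shows "rinv x = y"
proof -
  have "is_unit_r x" using assms unfolding is_unit_r_def by blast
  then have "rinv x = rinv x * (x * y)" using assms by simp
  also have "... = (rinv x * x) * y" by (simp add: mult.assoc)
  finally show ?thesis using unit_inv[OF \<open>is_unit_r x\<close>] by simp
qed

lemma unit_of_lr: assumes "L * (x::'a::ring_1) = 1" "x * R = 1" shows "is_unit_r x"
proof -
  have "L = L * (x * R)" using assms by simp
  also have "... = (L*x)*R" by (simp add: mult.assoc)
  finally have "L = R" using assms by simp
  then show ?thesis using assms unfolding is_unit_r_def by blast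
qed

lemma unit_rinv: "is_unit_r (x::'a::ring_1) \<Longrightarrow> is_unit_r (rinv x)"
  using unit_inv unfolding is_unit_r_def by blast

lemma unit_mult: assumes "is_unit_r (x::'a::ring_1)" "is_unit_r y" shows "is_unit_r (x*y)"
  "rinv (x*y) = rinv y * rinv x"
proof -
  have "(x*y) * (rinv y * rinv x) = x*(y * rinv y) * rinv x" by (simp add: mult.assoc)
  then have 1: "(x*y) * (rinv y * rinv x) = 1" using unit_inv[OF assms(1)] unit_inv[OF assms(2)] by simp
  have "(rinv y * rinv x) * (x*y) = rinv y*(rinv x * x) * y" by (simp add: mult.assoc)
  then have 2: "(rinv y * rinv x) * (x*y) = 1" using unit_inv[OF assms(1)] unit_inv[OF assms(2)] by simp
  show "is_unit_r (x*y)" using 1 2 unit_of_lr by blast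
  show "rinv (x*y) = rinv y * rinv x" using 1 2 rinv_eq by blast
qed

lemma rinv_rinv: "is_unit_r (x::'a::ring_1) \<Longrightarrow> rinv (rinv x) = x"
  using rinv_eq[of "rinv x" x] unit_inv[of x] by simp

lemma rinv4:
  assumes "is_unit_r (u1::'a::ring_1)" "is_unit_r u2" "is_unit_r u3" "is_unit_r u4"
  shows "rinv (u1 * rinv u2 * u3 * rinv u4) = u4 * rinv u3 * u2 * rinv u1"
proof -
  have u: "is_unit_r (u1 * rinv u2)" "is_unit_r (u1 * rinv u2 * u3)"
    using assms by (simp_all add: unit_mult unit_rinv)
  have "rinv (u1 * rinv u2 * u3 * rinv u4) = rinv (rinv u4) * rinv (u1 * rinv u2 * u3)"
    using u assms unit_rinv unit_mult(2) by blast
  also have "rinv (u1 * rinv u2 * u3) = rinv u3 * rinv (u1 * rinv u2)"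
    using u assms unit_rinv unit_mult(2) by blast
  also have "rinv (u1 * rinv u2) = rinv (rinv u2) * rinv u1"
    using u assms unit_rinv unit_mult(2) by blast
  finally show ?thesis using assms by (simp add: rinv_rinv mult.assoc)
qed

lemma rinv_one: "rinv (1::'a::ring_1) = 1" by (rule rinv_eq) simp_all

lemma left_inv_lemma:
  fixes x :: "'a::ring_1"
  assumes "\<alpha>1*x + s11*y1 + s12*y2 = 0" "\<alpha>2*x + s21*y1 + s22*y2 = 0" "\<beta>*x + \<gamma>1*y1 + \<gamma>2*y2 = 1"
    "t11*s11 + t12*s21 = 1" "t11*s12 + t12*s22 = 0" "t21*s11 + t22*s21 = 0" "t21*s12+t22*s22 = 1"
  shows "\<exists>L. L*x = 1"
proof -
  have a1: "s11*y1 + s12*y2 = -(\<alpha>1*x)" using assms(1) by (metis add.assoc add_eq_0_iff)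
  have a2: "s21*y1 + s22*y2 = -(\<alpha>2*x)" using assms(2) by (metis add.assoc add_eq_0_iff)
  have "y1 = (t11*s11 + t12*s21)*y1 + (t11*s12 + t12*s22)*y2" using assms by simp
  also have "... = t11*(s11*y1 + s12*y2) + t12*(s21*y1 + s22*y2)" by (simp add: algebra_simps)
  finally have Y1: "y1 = -((t11*\<alpha>1 + t12*\<alpha>2)*x)" using a1 a2 by (simp add: algebra_simps)
  have "y2 = (t21*s11 + t22*s21)*y1 + (t21*s12 + t22*s22)*y2" using assms by simp
  also have "... = t21*(s11*y1 + s12*y2) + t22*(s21*y1 + s22*y2)" by (simp add: algebra_simps)
  finally have Y2: "y2 = -((t21*\<alpha>1 + t22*\<alpha>2)*x)" using a1 a2 by (simp add: algebra_simps)
  have "(\<beta> - \<gamma>1*(t11*\<alpha>1 + t12*\<alpha>2) - \<gamma>2*(t21*\<alpha>1 + t22*\<alpha>2)) * x = 1"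
    using assms(3) unfolding Y1 Y2 by (simp add: algebra_simps)
  then show ?thesis by blast
qed

lemma right_inv_lemma:
  fixes x :: "'a::ring_1"
  assumes "x*\<alpha>1 + y1*s11 + y2*s21 = 0" "x*\<alpha>2 + y1*s12 + y2*s22 = 0" "x*\<beta> + y1*\<gamma>1 + y2*\<gamma>2 = 1"
    "s11*t11 + s12*t21 = 1" "s11*t12 + s12*t22 = 0" "s21*t11 + s22*t21 = 0" "s21*t12+s22*t22 = 1"
  shows "\<exists>R. x*R = 1"
proof -
  have a1: "y1*s11 + y2*s21 = -(x*\<alpha>1)" using assms(1) by (metis add.assoc add_eq_0_iff)
  have a2: "y1*s12 + y2*s22 = -(x*\<alpha>2)" using assms(2) by (metis add.assoc add_eq_0_iff)
  have "y1 = y1*(s11*t11 + s12*t21) + y2*(s21*t11 + s22*t21)" using assms by simp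
  also have "... = (y1*s11 + y2*s21)*t11 + (y1*s12 + y2*s22)*t21" by (simp add: algebra_simps)
  finally have Y1: "y1 = -(x*(\<alpha>1*t11 + \<alpha>2*t21))" using a1 a2 by (simp add: algebra_simps)
  have "y2 = y1*(s11*t12 + s12*t22) + y2*(s21*t12 + s22*t22)" using assms by simp
  also have "... = (y1*s11 + y2*s21)*t12 + (y1*s12 + y2*s22)*t22" by (simp add: algebra_simps)
  finally have Y2: "y2 = -(x*(\<alpha>1*t12 + \<alpha>2*t22))" using a1 a2 by (simp add: algebra_simps)
  have "x * (\<beta> - (\<alpha>1*t11 + \<alpha>2*t21)*\<gamma>1 - (\<alpha>1*t12 + \<alpha>2*t22)*\<gamma>2) = 1"
    using assms(3) unfolding Y1 Y2 by (simp add: algebra_simps)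
  then show ?thesis by blast
qed


lemma sum_idx: "sum f idx = f 1 + f 2 + f (3::nat)"
  by (simp add: idx_def eval_nat_numeral atLeastAtMostSuc_conv add.assoc add.commute)

lemma sum_3: assumes "idx = {i,k1,k2}" "distinct[i,k1,k2]" shows "sum f idx = f i + f k1 + f k2"
  unfolding assms(1) using assms(2) by (simp add: add.assoc)

lemma inv2:
  assumes "is_inverse_on {m1,m2} {k1,k2} A B" "m1 \<noteq> m2" "k1 \<noteq> k2"
  shows "A m1 k1 * B k1 m1 + A m1 k2 * B k2 m1 = 1"
        "A m1 k1 * B k1 m2 + A m1 k2 * B k2 m2 = 0"
        "A m2 k1 * B k1 m1 + A m2 k2 * B k2 m1 = 0"
        "A m2 k1 * B k1 m2 + A m2 k2 * B k2 m2 = 1"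
        "B k1 m1 * A m1 k1 + B k1 m2 * A m2 k1 = 1"
        "B k1 m1 * A m1 k2 + B k1 m2 * A m2 k2 = 0"
        "B k2 m1 * A m1 k1 + B k2 m2 * A m2 k1 = 0"
        "B k2 m1 * A m1 k2 + B k2 m2 * A m2 k2 = 1"
  using assms unfolding is_inverse_on_def by (auto simp: insert_commute)

lemma entry_unit:
  fixes A X :: "'a::ring_1 mat3"
  assumes AX: "\<forall>m\<in>idx. \<forall>n\<in>idx. (\<Sum>k\<in>idx. A m k * X k n) = (if m=n then 1 else 0)"
    and XA: "\<forall>m\<in>idx. \<forall>n\<in>idx. (\<Sum>k\<in>idx. X m k * A k n) = (if m=n then 1 else 0)"
    and sub: "is_inverse_on {m1,m2} {k1,k2} A B"
    and r: "idx = {j,m1,m2}" "distinct [j,m1,m2]" and c: "idx = {i,k1,k2}" "distinct [i,k1,k2]"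
  shows "is_unit_r (X i j)"
proof -
  have jm: "j \<in> idx" "m1 \<in> idx" "m2 \<in> idx" "i \<in> idx" "k1 \<in> idx" "k2 \<in> idx" using r c by auto
  note s = inv2[OF sub] 
  have m12: "m1 \<noteq> m2" "k1 \<noteq> k2" using r c by auto
  note s = s[OF m12]
  have e1: "A m1 i * X i j + A m1 k1 * X k1 j + A m1 k2 * X k2 j = 0"
    using AX jm r sum_3[OF c, of "\<lambda>k. A m1 k * X k j"] by auto
  have e2: "A m2 i * X i j + A m2 k1 * X k1 j + A m2 k2 * X k2 j = 0"
    using AX jm r sum_3[OF c, of "\<lambda>k. A m2 k * X k j"] by auto
  have e3: "A j i * X i j + A j k1 * X k1 j + A j k2 * X k2 j = 1"
    using AX jm r sum_3[OF c, of "\<lambda>k. A j k * X k j"] by auto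
  have f1: "X i j * A j k1 + X i m1 * A m1 k1 + X i m2 * A m2 k1 = 0"
    using XA jm c sum_3[OF r, of "\<lambda>k. X i k * A k k1"] by auto
  have f2: "X i j * A j k2 + X i m1 * A m1 k2 + X i m2 * A m2 k2 = 0"
    using XA jm c sum_3[OF r, of "\<lambda>k. X i k * A k k2"] by auto
  have f3: "X i j * A j i + X i m1 * A m1 i + X i m2 * A m2 i = 1"
    using XA jm c sum_3[OF r, of "\<lambda>k. X i k * A k i"] by auto
  obtain L where "L * X i j = 1"
    using left_inv_lemma[OF e1 e2 e3 s(5) s(6) s(7) s(8)] by blast
  moreover obtain R where "X i j * R = 1"
    using right_inv_lemma[OF f1 f2 f3 s(1) s(2) s(3) s(4)] by blast
  ultimately show ?thesis using unit_of_lr by blast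
qed


lemma unit_dm1:
  fixes d :: "'a::ring_1"
  assumes "u + v = 0" "u + v*d = 1" "w + v = 0" "w + d*v = 1"
  shows "is_unit_r (d-1)"
proof -
  have "v*(d-1) = (u + v*d) - (u + v)" by (simp add: algebra_simps)
  then have 1: "v*(d-1) = 1" using assms by simp
  have "(d-1)*v = (w + d*v) - (w + v)" by (simp add: algebra_simps)
  then have 2: "(d-1)*v = 1" using assms by simp
  show ?thesis using 1 2 unit_of_lr by blast
qed

lemma unit_D:
  fixes a b c d :: "'a::ring_1"
  assumes ua: "is_unit_r a" and ub: "is_unit_r b"
    and h: "a*b12 + b*b22 = 0" "c*b12 + d*b22 = 1" "b21*a + b22*c = 0" "b21*b + b22*d = 1"
  shows "is_unit_r (d * rinv b - c * rinv a)"
proof -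
  note A = unit_inv[OF ua] and B = unit_inv[OF ub]
  have bb: "b*b22 = -(a*b12)" using h(1) by (rule add_eq_0_iff[THEN iffD1])
  have "c * rinv a * (b * b22) = - (c * (rinv a * a) * b12)" unfolding bb by (simp add: mult.assoc)
  then have cc: "c * rinv a * (b * b22) = - (c*b12)" using A by simp
  have "(d * rinv b - c * rinv a) * (b*b22) = d * (rinv b * b) * b22 - c * rinv a * (b * b22)"
    by (simp add: algebra_simps)
  then have 1: "(d * rinv b - c * rinv a) * (b*b22) = 1" using cc B h(2) by (simp add: add.commute)
  have b21: "b21*a = -(b22*c)" using h(3) by (rule add_eq_0_iff2[THEN iffD1])
  have "b22 * c * rinv a = - (b21 * (a * rinv a))" by (simp add: mult.assoc[symmetric] b21)
  then have cc2: "b22 * c * rinv a = - b21" using A by simp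
  have "b22 * (d * rinv b - c * rinv a) = b22 * d * rinv b - b22 * c * rinv a"
    by (simp add: algebra_simps)
  also have "... = (b21*b + b22*d) * rinv b" using cc2 B by (simp add: algebra_simps)
  finally have "b22 * (d * rinv b - c * rinv a) = rinv b" using h(4) by simp
  then have "b * b22 * (d * rinv b - c * rinv a) = b * rinv b" by (simp add: mult.assoc)
  then have 2: "(b*b22) * (d * rinv b - c * rinv a) = 1" using B by simp
  show ?thesis using 1 2 unit_of_lr by blast
qed

lemma ratio1:
  fixes p q r c d g :: "'a::ring_1"
  assumes h: "p+q+r=0" "p+c*q+d*r=0" and u: "is_unit_r (d-1)" and g: "q*g = 1"
  shows "p*g = -(rinv (d-1)*(d-c))"
proof -
  define e where "e = rinv (d-1)"
  have E: "e*(d-1) = 1" using unit_inv[OF u] e_def by simp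
  have "(c-1)*q + (d-1)*r = (p+c*q+d*r) - (p+q+r)" by (simp add: algebra_simps)
  then have 1: "(c-1)*q + (d-1)*r = 0" using h by simp
  have "e*((c-1)*q + (d-1)*r) = e*(c-1)*q + (e*(d-1))*r" by (simp add: algebra_simps)
  then have "e*(c-1)*q + r = 0" using 1 E by simp
  then have R: "r = -(e*(c-1)*q)" by (rule add_eq_0_iff[THEN iffD1])
  have "p + (q + r) = 0" using h(1) by (simp add: add.assoc)
  then have "p = -(q+r)" by (rule add_eq_0_iff2[THEN iffD1])
  then have P: "p = -q - r" by simp
  have "p*g = -(q*g) + e*(c-1)*(q*g)" unfolding P R by (simp add: algebra_simps)
  also have "... = -1 + e*(c-1)" using g by simp
  also have "... = -(e*(d-1) - e*(c-1))" using E by simp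
  also have "... = -(e*(d-c))" by (simp add: algebra_simps)
  finally show ?thesis unfolding e_def .
qed

lemma ratio2:
  fixes p q r c d g :: "'a::ring_1"
  assumes h: "p+q+r=0" "p+c*q+d*r=0" and u: "is_unit_r (c-1)" and g: "r*g = 1"
  shows "p*g = rinv (c-1)*(d-c)"
proof -
  define e where "e = rinv (c-1)"
  have E: "e*(c-1) = 1" using unit_inv[OF u] e_def by simp
  have "(c-1)*q + (d-1)*r = (p+c*q+d*r) - (p+q+r)" by (simp add: algebra_simps)
  then have 1: "(c-1)*q + (d-1)*r = 0" using h by simp
  have "e*((c-1)*q + (d-1)*r) = (e*(c-1))*q + e*(d-1)*r" by (simp add: algebra_simps)
  then have "q + e*(d-1)*r = 0" using 1 E by simp
  then have Q: "q = -(e*(d-1)*r)" by (rule add_eq_0_iff2[THEN iffD1])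
  have "p + (q + r) = 0" using h(1) by (simp add: add.assoc)
  then have "p = -(q+r)" by (rule add_eq_0_iff2[THEN iffD1])
  then have P: "p = -q - r" by simp
  have "p*g = e*(d-1)*(r*g) - r*g" unfolding P Q by (simp add: algebra_simps)
  also have "... = e*(d-1) - e*(c-1)" using g E by simp
  also have "... = e*(d-c)" by (simp add: algebra_simps)
  finally show ?thesis unfolding e_def .
qed

lemma ratio_s:
  fixes x s t a b c d g :: "'a::ring_1"
  assumes h: "x + a*s + b*t = 0" "x + c*s + d*t = 0"
    and ua: "is_unit_r a" and ub: "is_unit_r b" and uD: "is_unit_r (d * rinv b - c * rinv a)"
    and g: "x*g = 1"
  shows "s*g = -(rinv a * rinv (d * rinv b - c * rinv a) * (d * rinv b - 1))"
    "t*g = rinv b * rinv (d * rinv b - c * rinv a) * (c * rinv a - 1)"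
proof -
  define D where "D = d * rinv b - c * rinv a"
  define S where "S = s*g"
  define T where "T = t*g"
  note A = unit_inv[OF ua] and B = unit_inv[OF ub] and DD = unit_inv[OF uD, folded D_def]
  have "(x + a*s + b*t)*g = x*g + a*S + b*T" unfolding S_def T_def by (simp add: algebra_simps)
  then have h1: "1 + a*S + b*T = 0" using h g by simp
  have "(x + c*s + d*t)*g = x*g + c*S + d*T" unfolding S_def T_def by (simp add: algebra_simps)
  then have h2: "1 + c*S + d*T = 0" using h g by simp
  have "b*T = -(1 + a*S)" using h1 by (metis add.assoc add.commute add_eq_0_iff)
  then have "rinv b * (b*T) = rinv b * (-(1 + a*S))" by (rule arg_cong)
  then have "T = rinv b * (-(1 + a*S))" using B by (simp add: mult.assoc[symmetric])
  then have TT: "T = -(rinv b * (1 + a*S))" by (simp only: mult_minus_right)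
  have Da: "D*a = d * rinv b * a - c" unfolding D_def using A by (simp add: algebra_simps)
  have "0 = 1 + c*S + d*T" using h2 by simp
  also have "... = 1 + c*S - d * rinv b * (1 + a*S)" unfolding TT by (simp add: algebra_simps)
  also have "... = 1 - d * rinv b - (d * rinv b * a - c) * S" by (simp add: algebra_simps)
  also have "... = 1 - d * rinv b - D*a*S" using Da by simp
  finally have "D*a*S = 1 - d * rinv b" by (simp add: algebra_simps)
  then have "rinv a * rinv D * (D*a*S) = rinv a * rinv D * (1 - d * rinv b)" by simp
  moreover have "rinv a * rinv D * (D*a*S) = S"
  proof -
    have "rinv a * rinv D * (D*a*S) = rinv a * (rinv D * D) * a * S" by (simp add: mult.assoc)
    then show ?thesis using A DD by simp
  qed
  ultimately have SS: "S = rinv a * rinv D * (1 - d * rinv b)" by simp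
  then show "s*g = -(rinv a * rinv (d * rinv b - c * rinv a) * (d * rinv b - 1))"
    unfolding S_def D_def by (simp add: algebra_simps)
  have "1 + a*S = 1 + (a * rinv a) * rinv D * (1 - d * rinv b)" unfolding SS by (simp add: mult.assoc)
  also have "... = rinv D * D + rinv D * (1 - d * rinv b)" using A DD by simp
  also have "... = rinv D * (1 - c * rinv a)" unfolding D_def by (simp add: algebra_simps)
  finally have "1 + a*S = rinv D * (1 - c * rinv a)" .
  then have "T = -(rinv b * rinv D * (1 - c * rinv a))" unfolding TT by (simp add: mult.assoc)
  then show "t*g = rinv b * rinv (d * rinv b - c * rinv a) * (c * rinv a - 1)"
    unfolding T_def D_def by (simp add: algebra_simps)
qed

lemma unit_sub_m1:
  fixes A :: "'a::ring_1 mat3"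
  assumes "is_inverse_on {m1,m2} {k1,k2} A B" "m1 \<noteq> m2" "k1 \<noteq> k2"
    "A m1 k1 = 1" "A m1 k2 = 1" "A m2 k1 = 1"
  shows "is_unit_r (A m2 k2 - 1)"
proof -
  note s = inv2[OF assms(1-3)]
  show ?thesis
    by (rule unit_dm1[of "B k2 m1" "B k2 m2" _ "B k1 m2"]) (use s assms(4-6) in simp_all)
qed

lemma idx_eq: "idx = {1,2,3::nat}" by (auto simp: idx_def)

theorem lemma10:
  fixes a b c d :: "'a::ring_1"
  assumes "in_hatS (hatmat a b c d)"
  shows "\<forall>j\<in>idx. \<forall>k\<in>idx. Phi (hatmat a b c d) j k =
    hatmat
      (rinv (d - 1) * (d - c) * rinv a * rinv (d * rinv b - c * rinv a) * (d * rinv b - 1))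
      (rinv (c - 1) * (d - c) * rinv b * rinv (d * rinv b - c * rinv a) * (c * rinv a - 1))
      (rinv (b - 1) * (b - a) * rinv a * rinv (d * rinv b - c * rinv a) * (d * rinv b - 1))
      (rinv (a - 1) * (b - a) * rinv b * rinv (d * rinv b - c * rinv a) * (c * rinv a - 1))
      j k"
proof -
  define M where "M = hatmat a b c d"
  have sub: "\<And>I J. I \<subseteq> idx \<Longrightarrow> J \<subseteq> idx \<Longrightarrow> I \<noteq> {} \<Longrightarrow> card I = card J \<Longrightarrow> \<exists>B. is_inverse_on I J M B"
    using assms unfolding M_def in_hatS_def in_S_def all_square_submatrices_invertible_def by blast
  define X where "X = inv3 M"
  have inv: "is_inverse_on idx idx M X"
  proof -
    have "\<exists>B. is_inverse_on idx idx M B" using sub[of idx idx] by (auto simp: idx_eq)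
    then show ?thesis unfolding X_def inv3_def by (rule someI_ex)
  qed
  have AX: "\<forall>m\<in>idx. \<forall>n\<in>idx. (\<Sum>k\<in>idx. M m k * X k n) = (if m=n then 1 else 0)"
   and XA: "\<forall>m\<in>idx. \<forall>n\<in>idx. (\<Sum>k\<in>idx. X m k * M k n) = (if m=n then 1 else 0)"
    using inv unfolding is_inverse_on_def by auto
  have Mv: "M 1 k = 1" "M k 1 = 1" "M 2 2 = a" "M 2 3 = b" "M 3 2 = c" "M 3 3 = d" for k
    by (simp_all add: M_def hatmat_def)
  have U: "is_unit_r (X i j)" if "idx = {j,mA,mB}" "distinct[j,mA,mB]" "idx={i,kA,kB}" "distinct[i,kA,kB]"
    for i j mA mB kA kB
  proof -
    have "{mA,mB} \<subseteq> idx" "{kA,kB} \<subseteq> idx" "card {mA,mB} = card {kA,kB}" using that by auto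
    then obtain B where "is_inverse_on {mA,mB} {kA,kB} M B" using sub by blast
    then show ?thesis using entry_unit[OF AX XA _ that] by blast
  qed
  have ux11: "is_unit_r (X 1 1)" by (rule U[where mA=2 and mB=3 and kA=2 and kB=3]) (auto simp: idx_eq insert_commute)
  have ux21: "is_unit_r (X 2 1)" by (rule U[where mA=2 and mB=3 and kA=1 and kB=3]) (auto simp: idx_eq insert_commute)
  have ux31: "is_unit_r (X 3 1)" by (rule U[where mA=2 and mB=3 and kA=1 and kB=2]) (auto simp: idx_eq insert_commute)
  have ux12: "is_unit_r (X 1 2)" by (rule U[where mA=1 and mB=3 and kA=2 and kB=3]) (auto simp: idx_eq insert_commute)
  have ux22: "is_unit_r (X 2 2)" by (rule U[where mA=1 and mB=3 and kA=1 and kB=3]) (auto simp: idx_eq insert_commute)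
  have ux32: "is_unit_r (X 3 2)" by (rule U[where mA=1 and mB=3 and kA=1 and kB=2]) (auto simp: idx_eq insert_commute)
  have ux13: "is_unit_r (X 1 3)" by (rule U[where mA=1 and mB=2 and kA=2 and kB=3]) (auto simp: idx_eq insert_commute)
  have ux23: "is_unit_r (X 2 3)" by (rule U[where mA=1 and mB=2 and kA=1 and kB=3]) (auto simp: idx_eq insert_commute)
  have ux33: "is_unit_r (X 3 3)" by (rule U[where mA=1 and mB=2 and kA=1 and kB=2]) (auto simp: idx_eq insert_commute)
  note ux = ux11 ux21 ux31 ux12 ux22 ux32 ux13 ux23 ux33
  have U1: "is_unit_r (M i j)" if "i \<in> idx" "j \<in> idx" for i j
  proof -
    have "\<exists>B. is_inverse_on {i} {j} M B" using sub[of "{i}" "{j}"] that by simp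
    then obtain B where "is_inverse_on {i} {j} M B" by blast
    then have "M i j * B j i = 1" "B j i * M i j = 1" unfolding is_inverse_on_def by auto
    then show ?thesis using unit_of_lr by blast
  qed
  have ua: "is_unit_r a" "is_unit_r b" "is_unit_r c" "is_unit_r d"
    using U1[of 2 2] U1[of 2 3] U1[of 3 2] U1[of 3 3] by (auto simp: idx_eq Mv)
  have um1: "is_unit_r (d-1)" "is_unit_r (c-1)" "is_unit_r (b-1)" "is_unit_r (a-1)"
  proof -
    have s: "\<exists>B. is_inverse_on {1,m} {1,k} M B" if "m \<in> {2,3}" "k \<in> {2,3}" for m k
      using sub[of "{1,m}" "{1,k}"] that by (auto simp: idx_eq)
    show "is_unit_r (d-1)" using s[of 3 3] unit_sub_m1[of 1 3 1 3 M] Mv by auto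
    show "is_unit_r (c-1)" using s[of 3 2] unit_sub_m1[of 1 3 1 2 M] Mv by auto
    show "is_unit_r (b-1)" using s[of 2 3] unit_sub_m1[of 1 2 1 3 M] Mv by auto
    show "is_unit_r (a-1)" using s[of 2 2] unit_sub_m1[of 1 2 1 2 M] Mv by auto
  qed
  have uD: "is_unit_r (d * rinv b - c * rinv a)"
  proof -
    obtain B where "is_inverse_on {2,3} {2,3} M B" using sub[of "{2,3}" "{2,3}"] by (auto simp: idx_eq)
    note s = inv2[OF this, simplified]
    show ?thesis by (rule unit_D[OF ua(1,2), of "B 2 3" "B 3 3" _ _ "B 3 2"]) (use s Mv in simp_all)
  qed
  have col: "(\<Sum>k\<in>idx. M m k * X k n) = M m 1 * X 1 n + M m 2 * X 2 n + M m 3 * X 3 n" for m n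
    by (rule sum_idx)
  have e12: "X 1 2 + X 2 2 + X 3 2 = 0" using AX col[of 1 2] Mv by (simp add: idx_eq)
  have e32: "X 1 2 + c * X 2 2 + d * X 3 2 = 0" using AX col[of 3 2] Mv by (simp add: idx_eq)
  have e13: "X 1 3 + X 2 3 + X 3 3 = 0" using AX col[of 1 3] Mv by (simp add: idx_eq)
  have e23: "X 1 3 + a * X 2 3 + b * X 3 3 = 0" using AX col[of 2 3] Mv by (simp add: idx_eq)
  have e21: "X 1 1 + a * X 2 1 + b * X 3 1 = 0" using AX col[of 2 1] Mv by (simp add: idx_eq)
  have e31: "X 1 1 + c * X 2 1 + d * X 3 1 = 0" using AX col[of 3 1] Mv by (simp add: idx_eq)
  have r1: "X 1 2 * rinv (X 2 2) = -(rinv (d-1)*(d-c))"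
    by (rule ratio1[OF e12 e32 um1(1) unit_inv(1)[OF ux(5)]])
  have r2: "X 1 2 * rinv (X 3 2) = rinv (c-1)*(d-c)"
    by (rule ratio2[OF e12 e32 um1(2) unit_inv(1)[OF ux(6)]])
  have r3: "X 1 3 * rinv (X 2 3) = -(rinv (b-1)*(b-a))"
    by (rule ratio1[OF e13 e23 um1(3) unit_inv(1)[OF ux(8)]])
  have r4: "X 1 3 * rinv (X 3 3) = rinv (a-1)*(b-a)"
    by (rule ratio2[OF e13 e23 um1(4) unit_inv(1)[OF ux(9)]])
  note rs = ratio_s[OF e21 e31 ua(1,2) uD unit_inv(1)[OF ux(1)]]
  have PhiE: "Phi M j k = X 1 j * rinv (X k j) * X k 1 * rinv (X 1 1)"
    if "is_unit_r (X k 1)" "is_unit_r (X k j)" "is_unit_r (X 1 j)" for j k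
  proof -
    have "Phi M j k = rinv (X 1 1 * rinv (X k 1) * X k j * rinv (X 1 j))"
      by (simp add: Phi_def J2_def LambdaL_def X_def)
    then show ?thesis using rinv4[OF ux(1) that] by simp
  qed
  have P1k: "Phi M 1 k = 1" if "is_unit_r (X k 1)" for k
  proof -
    have "Phi M 1 k = X 1 1 * (rinv (X k 1) * X k 1) * rinv (X 1 1)"
      using PhiE[OF that that ux(1)] by (simp add: mult.assoc)
    then show ?thesis using unit_inv[OF that] unit_inv[OF ux(1)] by simp
  qed
  have Pj1: "Phi M j 1 = 1" if "is_unit_r (X 1 j)" for j
  proof -
    have "Phi M j 1 = X 1 j * rinv (X 1 j) * (X 1 1 * rinv (X 1 1))"
      using PhiE[OF ux(1) that that] by (simp add: mult.assoc)
    then show ?thesis using unit_inv[OF that] unit_inv[OF ux(1)] by simp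
  qed
  have P22: "Phi M 2 2 = (X 1 2 * rinv (X 2 2)) * (X 2 1 * rinv (X 1 1))"
    using PhiE[OF ux(2) ux(5) ux(4)] by (simp add: mult.assoc)
  have P23: "Phi M 2 3 = (X 1 2 * rinv (X 3 2)) * (X 3 1 * rinv (X 1 1))"
    using PhiE[OF ux(3) ux(6) ux(4)] by (simp add: mult.assoc)
  have P32: "Phi M 3 2 = (X 1 3 * rinv (X 2 3)) * (X 2 1 * rinv (X 1 1))"
    using PhiE[OF ux(2) ux(8) ux(7)] by (simp add: mult.assoc)
  have P33: "Phi M 3 3 = (X 1 3 * rinv (X 3 3)) * (X 3 1 * rinv (X 1 1))"
    using PhiE[OF ux(3) ux(9) ux(7)] by (simp add: mult.assoc)
  have F22: "Phi M 2 2 = rinv (d - 1) * (d - c) * rinv a * rinv (d * rinv b - c * rinv a) * (d * rinv b - 1)"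
    unfolding P22 r1 rs(1) by (simp add: mult.assoc)
  have F23: "Phi M 2 3 = rinv (c - 1) * (d - c) * rinv b * rinv (d * rinv b - c * rinv a) * (c * rinv a - 1)"
    unfolding P23 r2 rs(2) by (simp add: mult.assoc)
  have F32: "Phi M 3 2 = rinv (b - 1) * (b - a) * rinv a * rinv (d * rinv b - c * rinv a) * (d * rinv b - 1)"
    unfolding P32 r3 rs(1) by (simp add: mult.assoc)
  have F33: "Phi M 3 3 = rinv (a - 1) * (b - a) * rinv b * rinv (d * rinv b - c * rinv a) * (c * rinv a - 1)"
    unfolding P33 r4 rs(2) by (simp add: mult.assoc)
  show ?thesis
    unfolding M_def[symmetric] idx_eq
    using P1k[OF ux(1)] P1k[OF ux(2)] P1k[OF ux(3)] Pj1[OF ux(4)] Pj1[OF ux(7)] F22 F23 F32 F33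
    by (simp add: hatmat_def)
qed


end
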